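(* If for some $u$ and some $i\in\{1,2,3\}$ the cusp $P_i'$ lies on $\mathcal{E}$, then $P_i'=P_i$, and this point is one of the four points $\frac{1}{\sqrt{a^2+b^2}}\left(\pm a^2,\pm b^2\right)$.
   Context: Let $a>b>0$ and $c>0$ with $c^2=a^2-b^2$. Let $\mathcal{E}$ be the ellipse $x^2/a^2+y^2/b^2=1$, parametrized by $P(t)=(a\cos t,b\sin t)$. For $u\in\mathbb{R}$ let $M=(a\cos u,b\sin u)$ and $\Delta_u(t)=(x_u(t),y_u(t))$, where $x_u(t)=\frac1a\big(c^2(1+\cos(t+u))\cos t-a^2\cos u\big)$ and $y_u(t)=\frac1b\big(c^2\cos t\sin(t+u)-c^2\sin t-a^2\sin u\big)$ (the negative pedal curve of $\mathcal{E}$ with respect to $M$). For $i=1,2,3$ let $t_i=-u/3-2\pi(i-1)/3$, $P_i=P(t_i)$, and $P_i'=\Delta_u(t_i)$ (the cusps). *)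

theory Defs
  imports Complex_Main
begin

definition ellipse :: "real \<Rightarrow> real \<Rightarrow> (real \<times> real) set" where
  "ellipse a b = {(x, y). x\<^sup>2 / a\<^sup>2 + y\<^sup>2 / b\<^sup>2 = 1}"

definition ellP :: "real \<Rightarrow> real \<Rightarrow> real \<Rightarrow> real \<times> real" where
  "ellP a b t = (a * cos t, b * sin t)"

text \<open>Negative pedal curve Delta_u(t) of the ellipse with respect to M = P(u), with c^2 = a^2 - b^2.\<close>
definition neg_pedal :: "real \<Rightarrow> real \<Rightarrow> real \<Rightarrow> real \<Rightarrow> real \<Rightarrow> real \<times> real" where
  "neg_pedal a b c u t =
     ((1 / a) * (c\<^sup>2 * (1 + cos (t + u)) * cos t - a\<^sup>2 * cos u),
      (1 / b) * (c\<^sup>2 * cos t * sin (t + u) - c\<^sup>2 * sin t - a\<^sup>2 * sin u))"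

definition cusp_param :: "real \<Rightarrow> nat \<Rightarrow> real" where
  "cusp_param u i = - u / 3 - 2 * pi * (real i - 1) / 3"

end

theory Submission
  imports Defs
begin

lemma per_cos: "cos (- v - 2 * real j * pi) = cos v"
  by (simp add: cos_diff)
lemma per_sin: "sin (- v - 2 * real j * pi) = - sin v"
  by (simp add: sin_diff)

theorem proposition6p4:
  fixes a b c u :: real and i :: nat
  assumes "a > b" and "b > 0" and "c > 0" and "c\<^sup>2 = a\<^sup>2 - b\<^sup>2"
    and "i \<in> {1, 2, 3}"
    and "neg_pedal a b c u (cusp_param u i) \<in> ellipse a b"
  shows "neg_pedal a b c u (cusp_param u i) = ellP a b (cusp_param u i)
    \<and> (\<exists>s1 s2 :: real. s1 \<in> {-1, 1} \<and> s2 \<in> {-1, 1} \<and>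
         ellP a b (cusp_param u i) =
           (s1 * a\<^sup>2 / sqrt (a\<^sup>2 + b\<^sup>2), s2 * b\<^sup>2 / sqrt (a\<^sup>2 + b\<^sup>2)))"
proof -
  define t where "t = cusp_param u i"
  define j where "j = i - 1"
  define C where "C = cos t"
  define S where "S = sin t"
  define k where "k = a\<^sup>2 + b\<^sup>2"
  have a0: "a > 0" using assms by linarith
  have k0: "k > 0" using a0 assms by (simp add: k_def add_pos_pos)
  have ij: "real i - 1 = real j" using assms(5) by (auto simp: j_def)
  have ut: "u = - (3 * t) - 2 * real j * pi"
    using ij by (simp add: t_def cusp_param_def algebra_simps)
  have tu: "t + u = - (2 * t) - 2 * real j * pi" using ut by simp
  have CS: "C\<^sup>2 + S\<^sup>2 = 1" by (simp add: C_def S_def)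
  have c3: "cos u = 4 * C^3 - 3 * C" unfolding ut per_cos C_def by (rule cos_treble_cos)
  have s3: "sin u = - (3 * S - 4 * S^3)"
  proof -
    have "sin (3 * t) = sin (2 * t + t)" by simp
    also have "\<dots> = 3 * S - 4 * S^3"
      unfolding sin_add sin_double cos_double C_def[symmetric] S_def[symmetric]
      using CS by (simp add: power2_eq_square power3_eq_cube algebra_simps)
        (metis mult.commute mult.left_commute distrib_left mult.right_neutral)
    finally show ?thesis unfolding ut per_sin by simp
  qed
  have c2: "cos (t + u) = 2 * C\<^sup>2 - 1" unfolding tu per_cos C_def
    by (simp add: cos_double_cos)
  have s2: "sin (t + u) = - (2 * S * C)" unfolding tu per_sin C_def S_def
    by (simp add: sin_double)
  define x where "x = C * (3 * a\<^sup>2 - 2 * k * C\<^sup>2) / a"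
  define y where "y = S * (3 * b\<^sup>2 - 2 * k * S\<^sup>2) / b"
  have NP: "neg_pedal a b c u t = (x, y)"
  proof -
    have n: "neg_pedal a b c u t = ((c\<^sup>2*(1+cos(t+u))*C - a\<^sup>2*cos u)/a,
       (c\<^sup>2*C*sin(t+u) - c\<^sup>2*S - a\<^sup>2*sin u)/b)" by (simp add: neg_pedal_def C_def S_def)
    have e1: "c\<^sup>2*(1+cos(t+u))*C - a\<^sup>2*cos u = C * (3 * a\<^sup>2 - 2 * k * C\<^sup>2)"
      unfolding c2 c3 assms(4) k_def by (simp add: algebra_simps power2_eq_square power3_eq_cube)
    have cc: "C*C = 1 - S*S" using CS by (simp add: power2_eq_square)
    have "c\<^sup>2*C*sin(t+u) = - 2*c\<^sup>2*S*(C*C)" unfolding s2 by (simp add: algebra_simps)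
    also have "\<dots> = - 2*c\<^sup>2*S*(1 - S*S)" using cc by simp
    finally have e0: "c\<^sup>2*C*sin(t+u) = - 2*c\<^sup>2*S*(1 - S*S)" .
    have e2: "c\<^sup>2*C*sin(t+u) - c\<^sup>2*S - a\<^sup>2*sin u = S * (3 * b\<^sup>2 - 2 * k * S\<^sup>2)"
      unfolding e0 unfolding s3 assms(4) k_def by (simp add: algebra_simps power2_eq_square power3_eq_cube)
    show ?thesis unfolding n e1 e2 x_def y_def ..
  qed
  have E: "x\<^sup>2 / a\<^sup>2 + y\<^sup>2 / b\<^sup>2 = 1" using assms(6) NP by (simp add: ellipse_def t_def)
  define D where "D = k * C\<^sup>2 - a\<^sup>2"
  have key: "a^4 * b^4 * (x\<^sup>2 / a\<^sup>2 + y\<^sup>2 / b\<^sup>2 - 1) = - 4 * (a\<^sup>2 - b\<^sup>2) * D^3"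
  proof -
    define A where "A = a\<^sup>2"
    define B where "B = b\<^sup>2"
    define p where "p = C\<^sup>2"
    have A0: "A > 0" using a0 by (simp add: A_def)
    have B0: "B > 0" using assms(2) by (simp add: B_def)
    have S2: "S\<^sup>2 = 1 - p" using CS by (simp add: p_def)
    have kk: "k = A + B" by (simp add: k_def A_def B_def)
    have x2: "x\<^sup>2 / a\<^sup>2 = p * (3 * A - 2 * k * p)\<^sup>2 / A^2"
      by (simp add: x_def power_divide power_mult_distrib A_def p_def power2_eq_square)
    have y2: "y\<^sup>2 / b\<^sup>2 = (1 - p) * (3 * B - 2 * k * (1 - p))\<^sup>2 / B^2"
      by (simp add: y_def power_divide power_mult_distrib B_def S2[symmetric] power2_eq_square)
    have poly: "B^2 * (p * (3 * A - 2 * k * p)\<^sup>2) + A^2 * ((1 - p) * (3 * B - 2 * k * (1 - p))\<^sup>2) - A^2 * B^2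
        = - 4 * (A - B) * (k * p - A)^3"
      unfolding kk by (simp add: power2_eq_square power3_eq_cube algebra_simps)
    have "a^4 * b^4 = A^2 * B^2" by (simp add: A_def B_def flip: power_mult)
    then have "a^4 * b^4 * (x\<^sup>2 / a\<^sup>2 + y\<^sup>2 / b\<^sup>2 - 1) =
       B^2 * (p * (3 * A - 2 * k * p)\<^sup>2) + A^2 * ((1 - p) * (3 * B - 2 * k * (1 - p))\<^sup>2) - A^2 * B^2"
      unfolding x2 y2 using A0 B0 by (simp add: field_simps)
    also have "\<dots> = - 4 * (a\<^sup>2 - b\<^sup>2) * D^3" unfolding poly by (simp add: D_def A_def B_def p_def)
    finally show ?thesis .
  qed
  have "- 4 * (a\<^sup>2 - b\<^sup>2) * D^3 = 0" using key E by (metis diff_self mult_zero_right)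
  then have "(a\<^sup>2 - b\<^sup>2) * D^3 = 0" by linarith
  moreover have "a\<^sup>2 - b\<^sup>2 \<noteq> 0" using assms(1,2) a0
  proof -
    have "b\<^sup>2 < a\<^sup>2" using assms(1,2) by (simp add: power_strict_mono)
    then show ?thesis by simp
  qed
  ultimately have D0: "D = 0" by simp
  have kC: "k * C\<^sup>2 = a\<^sup>2" using D0 D_def by simp
  have kS: "k * S\<^sup>2 = b\<^sup>2" 
  proof -
    have "S\<^sup>2 = 1 - C\<^sup>2" using CS by simp
    then have "k * S\<^sup>2 = k - k * C\<^sup>2" by (simp add: right_diff_distrib)
    then show ?thesis using kC by (simp add: k_def)
  qed
  have xe: "x = a * C" using kC a0 by (simp add: x_def field_simps power2_eq_square)
  have ye: "y = b * S" using kS assms(2) by (simp add: y_def field_simps power2_eq_square)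
  have sk: "sqrt k > 0" using k0 by simp
  have sq: "(sqrt k)\<^sup>2 = k" using k0 by simp
  obtain s1 where s1: "s1 \<in> {-1, 1}" "C = s1 * a / sqrt k"
  proof -
    have "(C * sqrt k)\<^sup>2 = a\<^sup>2" using kC sq by (simp add: power_mult_distrib algebra_simps)
    then have "C * sqrt k = a \<or> C * sqrt k = - a" by (metis power2_eq_iff)
    then show ?thesis
    proof
      assume h: "C * sqrt k = a"
      show ?thesis by (rule that[of 1]) (use h sk in \<open>auto simp: field_simps\<close>)
    next
      assume h: "C * sqrt k = - a"
      show ?thesis by (rule that[of "-1"]) (use h sk in \<open>auto simp: field_simps\<close>)
    qed
  qed
  obtain s2 where s2: "s2 \<in> {-1, 1}" "S = s2 * b / sqrt k"
  proof -
    have "(S * sqrt k)\<^sup>2 = b\<^sup>2" using kS sq by (simp add: power_mult_distrib algebra_simps)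
    then have "S * sqrt k = b \<or> S * sqrt k = - b" by (metis power2_eq_iff)
    then show ?thesis
    proof
      assume h: "S * sqrt k = b"
      show ?thesis by (rule that[of 1]) (use h sk in \<open>auto simp: field_simps\<close>)
    next
      assume h: "S * sqrt k = - b"
      show ?thesis by (rule that[of "-1"]) (use h sk in \<open>auto simp: field_simps\<close>)
    qed
  qed
  have P: "ellP a b t = (a * C, b * S)" by (simp add: ellP_def C_def S_def)
  have e1: "a * C = s1 * a\<^sup>2 / sqrt (a\<^sup>2 + b\<^sup>2)" using s1(2) by (simp add: k_def power2_eq_square)
  have e2: "b * S = s2 * b\<^sup>2 / sqrt (a\<^sup>2 + b\<^sup>2)" using s2(2) by (simp add: k_def power2_eq_square)
  show ?thesis unfolding t_def[symmetric] NP P xe ye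
    using s1(1) s2(1) e1 e2 by blast
qed

end
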